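(* Let $n\in\mathbb N$ and let $\nu>-1$ be a real number with $\nu\ne0$. Then all zeros of the polynomial $p(z)=F(-n,\nu+2;-n+1-\nu;z)$ lie in the open unit disk $\mathbb D$.
   Context: The hypergeometric function is $F(a,b;c;z)=\sum_{k\ge0}\frac{(a)_k(b)_k}{(c)_k}\frac{z^k}{k!}$, where $(x)_0=1$ and $(x)_k=x(x+1)\cdots(x+k-1)$; when $a=-n$ with $n\in\mathbb N$ the series terminates at $k=n$ and defines a polynomial for all $z\in\mathbb C$ whenever $c\notin\{0,-1,\dots,1-n\}$. $\mathbb D=\{|z|<1\}$. *)

theory Defs
  imports "HOL-Analysis.Analysis"
begin

text \<open>Terminating Gauss hypergeometric function F(-n,b;c;z): the series
  sum_k (-n)_k (b)_k / (c)_k z^k / k! terminates at k = n since (-n)_k = 0 for k > n.\<close>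
definition hyp2F1_term :: "nat \<Rightarrow> complex \<Rightarrow> complex \<Rightarrow> complex \<Rightarrow> complex" where
  "hyp2F1_term n b c z =
     (\<Sum>k\<le>n. pochhammer (- of_nat n) k * pochhammer b k / pochhammer c k * z ^ k / fact k)"

end

theory Submission
  imports Defs
begin

definition al :: "real \<Rightarrow> nat \<Rightarrow> real" where "al v k = pochhammer (v+2) k / fact k"
definition be :: "real \<Rightarrow> nat \<Rightarrow> real" where "be v m = pochhammer v m / fact m"
definition dd :: "real \<Rightarrow> nat \<Rightarrow> nat \<Rightarrow> real" where
  "dd v n k = (if k \<le> n then al v k * be v (n-k) else 0)"
definition SS :: "real \<Rightarrow> nat \<Rightarrow> complex \<Rightarrow> complex" where
  "SS v n z = (\<Sum>k\<le>n. of_real (dd v n k) * z^k)"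

lemma al_Suc: "al v (Suc j) = al v j * (v + 2 + of_nat j) / (of_nat j + 1)"
  by (simp add: al_def pochhammer_Suc field_simps)

lemma be_Suc: "be v (Suc j) = be v j * (v + of_nat j) / (of_nat j + 1)"
  by (simp add: be_def pochhammer_Suc field_simps)

lemma al0[simp]: "al v 0 = 1" by (simp add: al_def)
lemma be0[simp]: "be v 0 = 1" by (simp add: be_def)

lemma coef_alg:
  fixes I J v A B a b :: real
  assumes "I \<ge> 0" "J \<ge> 0" and ha: "a * (J+1) = A*(v+2+J)" and hb: "b * (I+1) = B*(v+I)"
  shows "(I+J+2) * (a * b) =
     (I+J+1+v+2)*(A*b) + (I+J+1+v)*(a*B) - (I+J+1+2 * v+1)*(A*B)"
proof -
  have "(J+1)*(I+1)*((I+J+2) * (a * b) -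
     ((I+J+1+v+2)*(A*b) + (I+J+1+v)*(a*B) - (I+J+1+2 * v+1)*(A*B))) = 0"
    using ha hb by algebra
  moreover have "(J+1)*(I+1) \<noteq> 0" using assms by auto
  ultimately show ?thesis by simp
qed

lemma coef:
  assumes "k \<le> Suc m + 1"
  shows "of_nat (Suc m + 1) * dd v (Suc m + 1) k =
     (of_nat (Suc m) + v + 2) * (if k = 0 then 0 else dd v (Suc m) (k-1))
     + (of_nat (Suc m) + v) * dd v (Suc m) k
     - (of_nat (Suc m) + 2 * v + 1) * (if k = 0 then 0 else dd v m (k-1))"
proof -
  consider "k = 0" | "k = Suc m + 1" | j where "k = Suc j" "j \<le> m"
    using assms by (cases k) (auto simp: le_Suc_eq)
  then show ?thesis
  proof cases
    case 1
    then show ?thesis by (simp add: dd_def be_Suc[of v "Suc m"] field_simps)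
  next
    case 2
    then show ?thesis by (simp add: dd_def al_Suc[of v "Suc m"] field_simps)
  next
    case 3
    then obtain i where i: "m = j + i" using 3 by (metis le_add_diff_inverse)
    have e1: "Suc m + 1 - Suc j = Suc i" using i by simp
    have e2: "Suc m - j = Suc i" using i by simp
    have e3: "Suc m - Suc j = i" using i by simp
    have e4: "m - j = i" using i by simp
    have A: "of_nat (Suc m + 1) = real i + real j + 2" "of_nat (Suc m) = real i + real j + 1"
      using i by simp_all
    have ha: "al v (Suc j) * (real j + 1) = al v j * (v + 2 + real j)" by (simp add: al_Suc)
    have hb: "be v (Suc i) * (real i + 1) = be v i * (v + real i)" by (simp add: be_Suc)
    show ?thesis using 3 i coef_alg[OF _ _ ha hb]
      by (simp add: dd_def e1 e2 e3 e4 A add.commute add.left_commute)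
  qed
qed

lemma SS_gen: "n \<le> N \<Longrightarrow> SS v n z = (\<Sum>k\<le>N. of_real (dd v n k) * z^k)"
  unfolding SS_def
  by (rule sum.mono_neutral_left) (auto simp: dd_def)

lemma SS_shift:
  assumes "n + 1 \<le> N"
  shows "z * SS v n z = (\<Sum>k\<le>N. of_real (if k=0 then 0 else dd v n (k-1)) * z^k)"
proof -
  have "(\<Sum>k\<le>N. of_real (if k=0 then 0 else dd v n (k-1)) * z^k) =
        (\<Sum>k\<le>Suc n. of_real (if k=0 then 0 else dd v n (k-1)) * z^k)"
    using assms by (intro sum.mono_neutral_right) (auto simp: dd_def)
  also have "\<dots> = (\<Sum>k\<le>n. of_real (dd v n k) * z^(Suc k))"
    by (subst sum.atMost_Suc_shift) simp
  also have "\<dots> = z * SS v n z"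
    by (simp add: SS_def sum_distrib_left algebra_simps)
  finally show ?thesis by simp
qed

lemma SS_rec:
  "of_nat (Suc m + 1) * SS v (Suc m + 1) z =
     (of_real (of_nat (Suc m) + v + 2) * z + of_real (of_nat (Suc m) + v)) * SS v (Suc m) z
     - of_real (of_nat (Suc m) + 2 * v + 1) * (z * SS v m z)"
    (is "?L = ?R")
proof -
  define N where "N = Suc m + 1"
  define c1 where "c1 = (of_nat (Suc m) + v + 2 :: real)"
  define c2 where "c2 = (of_nat (Suc m) + v :: real)"
  define c3 where "c3 = (of_nat (Suc m) + 2 * v + 1 :: real)"
  define D1 where "D1 = (\<lambda>k. if k=0 then 0 else dd v (Suc m) (k-1))"
  define D2 where "D2 = (\<lambda>k. if k=0 then 0 else dd v m (k-1))"
  have "?R = of_real c1 * (z * SS v (Suc m) z) + of_real c2 * SS v (Suc m) z - of_real c3 * (z * SS v m z)"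
    by (simp add: c1_def c2_def c3_def algebra_simps)
  also have "\<dots> = of_real c1 * (\<Sum>k\<le>N. of_real (D1 k) * z^k) + of_real c2 * (\<Sum>k\<le>N. of_real (dd v (Suc m) k) * z^k)
       - of_real c3 * (\<Sum>k\<le>N. of_real (D2 k) * z^k)"
    unfolding D1_def D2_def
    by (subst SS_shift[of _ N], simp add: N_def, subst SS_shift[of _ N], simp add: N_def,
        subst SS_gen[of _ N], simp add: N_def, rule refl)
  also have "\<dots> = (\<Sum>k\<le>N. of_real (c1 * D1 k + c2 * dd v (Suc m) k - c3 * D2 k) * z^k)"
    by (simp add: sum_distrib_left sum.distrib sum_subtractf algebra_simps)
  also have "\<dots> = (\<Sum>k\<le>N. of_real (of_nat N * dd v N k) * z^k)"
  proof (rule sum.cong[OF refl])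
    fix k assume "k \<in> {..N}"
    then have "k \<le> Suc m + 1" by (simp add: N_def)
    from coef[OF this, of v]
    have "c1 * D1 k + c2 * dd v (Suc m) k - c3 * D2 k = of_nat N * dd v N k"
      by (simp add: N_def c1_def c2_def c3_def D1_def D2_def)
    then show "of_real (c1 * D1 k + c2 * dd v (Suc m) k - c3 * D2 k) * z^k =
        of_real (of_nat N * dd v N k) * z^k" by simp
  qed
  also have "\<dots> = ?L"
    by (simp add: SS_def N_def sum_distrib_left algebra_simps)
  finally show ?thesis by simp
qed

lemma key:
  fixes x :: complex and n :: nat and v :: real
  assumes n: "n \<ge> 1" and v: "v > -1"
    and h: "cmod (of_nat n * x - of_real (real n + v + 1)) \<le> \<bar>v\<bar>"
  shows "cmod (of_real (real n + v) * x - of_real (real n + 2 * v + 1)) \<le> \<bar>v\<bar> * cmod x"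
proof -
  define p where "p = Re x"
  define q where "q = Im x"
  define Y1 where "Y1 = real n * p - (real n + v + 1)"
  define Y2 where "Y2 = real n * q"
  define s where "s = cmod (of_nat n * x - of_real (real n + v + 1))"
  have s2: "s^2 = Y1^2 + Y2^2"
    by (simp add: s_def cmod_power2 Y1_def Y2_def p_def q_def)
  have sle: "s \<le> \<bar>v\<bar>" using h by (simp add: s_def)
  have s0: "s \<ge> 0" by (simp add: s_def)
  have "\<bar>Y1\<bar>^2 \<le> s^2" using s2 by (simp add: power2_abs)
  then have Y1le: "\<bar>Y1\<bar> \<le> s" using s0 by (rule power2_le_imp_le)
  have "\<bar>v * Y1\<bar> \<le> \<bar>v\<bar> * s" unfolding abs_mult using Y1le by (simp add: mult_left_mono)
  then have vY: "v * Y1 \<le> \<bar>v\<bar> * s" by linarith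
  have h2: "0 \<le> 2 * \<bar>v\<bar> + (real n + 2 * v) * (\<bar>v\<bar>+s)"
  proof (cases "real n + 2 * v \<ge> 0")
    case True
    then show ?thesis using s0 by simp
  next
    case False
    have "0 \<le> (real n + 2 * v + 1) * (\<bar>v\<bar>+s)" using n v s0 by simp
    then show ?thesis using sle by (simp add: algebra_simps)
  qed
  have h1: "0 \<le> \<bar>v\<bar> - s" using sle by simp
  have fac: "0 \<le> (\<bar>v\<bar> - s) * (2 * \<bar>v\<bar> + (real n + 2 * v) * (\<bar>v\<bar>+s))"
    using h1 h2 by simp
  have vv: "\<bar>v\<bar> * \<bar>v\<bar> = v * v" by simp
  have e: "(\<bar>v\<bar> - s) * (2 * \<bar>v\<bar> + (real n + 2 * v) * (\<bar>v\<bar>+s)) =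
     v^2 * (real n + 2 * v + 2) - 2 * \<bar>v\<bar> * s - (real n + 2 * v) * s^2"
    by (simp add: algebra_simps power2_eq_square vv)
  have poly: "real n * (v^2 * (p^2+q^2) - (((real n+v) * p - (real n+2 * v+1))^2 + ((real n+v) * q)^2))
      = v^2 * (real n+2 * v+2) - 2 * v * Y1 - (real n+2 * v) * (Y1^2+Y2^2)"
    by (simp add: Y1_def Y2_def power2_eq_square algebra_simps)
  have "0 \<le> real n * (v^2 * (p^2+q^2) - (((real n+v) * p - (real n+2 * v+1))^2 + ((real n+v) * q)^2))"
    unfolding poly s2[symmetric] using fac e vY by linarith
  then have F: "((real n+v) * p - (real n+2 * v+1))^2 + ((real n+v) * q)^2 \<le> v^2 * (p^2+q^2)"
    using n by (simp add: zero_le_mult_iff)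
  have "(cmod (of_real (real n + v) * x - of_real (real n + 2 * v + 1)))^2 \<le> (\<bar>v\<bar> * cmod x)^2"
    using F by (simp add: cmod_power2 power_mult_distrib p_def q_def power2_abs)
  then show ?thesis by (rule power2_le_imp_le) simp
qed

lemma SS0: "SS v 0 z = 1" by (simp add: SS_def dd_def)
lemma SS1: "SS v (Suc 0) z = of_real v + of_real (v + 2) * z"
  by (simp add: SS_def dd_def be_def al_def)

lemma nzB:
  assumes v: "v > -1" and z: "cmod z \<ge> 1" and A: "A \<noteq> 0"
    and h: "cmod (of_nat (Suc m) * B - of_real (real (Suc m) + v + 1) * z * A) \<le> \<bar>v\<bar> * cmod z * cmod A"
  shows "B \<noteq> 0"
proof
  have nm: "cmod (of_real (real (Suc m) + v + 1) * z * A) = \<bar>real (Suc m) + v + 1\<bar> * (cmod z * cmod A)"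
    by (simp only: norm_mult norm_of_real mult.assoc)
  assume "B = 0"
  with h have "\<bar>real (Suc m) + v + 1\<bar> * (cmod z * cmod A) \<le> \<bar>v\<bar> * (cmod z * cmod A)"
    using nm by (simp add: mult.assoc)
  moreover have "cmod z * cmod A > 0"
  proof -
    have "cmod z > 0" using z by linarith
    moreover have "cmod A > 0" using A by simp
    ultimately show ?thesis by (rule mult_pos_pos)
  qed
  ultimately have "\<bar>real (Suc m) + v + 1\<bar> \<le> \<bar>v\<bar>" by (rule mult_right_le_imp_le)
  then show False using v by (simp split: abs_split)
qed

lemma main:
  assumes v: "v > -1" and z: "cmod z \<ge> 1"
  shows "SS v m z \<noteq> 0 \<and>
    cmod (of_nat (Suc m) * SS v (Suc m) z - of_real (real (Suc m) + v + 1) * z * SS v m z)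
      \<le> \<bar>v\<bar> * cmod z * cmod (SS v m z)"
proof (induction m)
  case 0
  have "cmod (of_real v :: complex) \<le> \<bar>v\<bar> * cmod z" using z
    by (simp add: mult_le_cancel_left1)
  then show ?case by (simp add: SS0 SS1 algebra_simps)
next
  case (Suc m)
  define A where "A = SS v m z"
  define B where "B = SS v (Suc m) z"
  define C where "C = SS v (Suc (Suc m)) z"
  define n where "n = Suc m"
  have A0: "A \<noteq> 0" and hA: "cmod (of_nat n * B - of_real (real n + v + 1) * z * A) \<le> \<bar>v\<bar> * cmod z * cmod A"
    using Suc.IH by (simp_all add: A_def B_def n_def)
  have B0: "B \<noteq> 0" using nzB[OF v z A0] hA by (simp add: n_def)
  have z0: "z \<noteq> 0" using z by auto
  have rec: "of_nat (Suc m + 1) * C = (of_real (of_nat (Suc m) + v + 2) * z + of_real (of_nat (Suc m) + v)) * B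
     - of_real (of_nat (Suc m) + 2 * v + 1) * (z * A)"
    unfolding A_def B_def C_def using SS_rec[of m v z] by simp
  have E: "of_nat (Suc n) * C - of_real (real (Suc n) + v + 1) * z * B
      = of_real (real n + v) * B - of_real (real n + 2 * v + 1) * (z * A)"
    using rec by (simp add: n_def algebra_simps)
  define x where "x = B / (z * A)"
  have zA: "z * A \<noteq> 0" using z0 A0 by simp
  have "of_nat n * B - of_real (real n + v + 1) * z * A = (of_nat n * x - of_real (real n + v + 1)) * (z * A)"
    using zA by (simp add: x_def field_simps)
  then have "cmod (of_nat n * x - of_real (real n + v + 1)) * cmod (z * A) \<le> \<bar>v\<bar> * cmod (z * A)"
    using hA by (simp add: norm_mult mult.assoc)
  then have hx: "cmod (of_nat n * x - of_real (real n + v + 1)) \<le> \<bar>v\<bar>"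
    using zA by simp
  have kx: "cmod (of_real (real n + v) * x - of_real (real n + 2 * v + 1)) \<le> \<bar>v\<bar> * cmod x"
    by (rule key[OF _ v hx]) (simp add: n_def)
  have "of_real (real n + v) * B - of_real (real n + 2 * v + 1) * (z * A)
      = (of_real (real n + v) * x - of_real (real n + 2 * v + 1)) * (z * A)"
    using zA by (simp add: x_def field_simps)
  then have "cmod (of_real (real n + v) * B - of_real (real n + 2 * v + 1) * (z * A))
      \<le> \<bar>v\<bar> * cmod x * cmod (z * A)"
    using kx by (simp add: norm_mult mult_right_mono)
  also have "\<bar>v\<bar> * cmod x * cmod (z * A) = \<bar>v\<bar> * cmod B"
    using zA by (simp add: x_def norm_divide)
  also have "\<dots> \<le> \<bar>v\<bar> * cmod z * cmod B"
    using z by (simp add: mult_le_cancel_left1 mult_right_mono)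
  finally show ?case using B0 E by (simp add: B_def C_def n_def)
qed

lemma poch_nz:
  assumes "v > -1" "v \<noteq> 0"
  shows "pochhammer v m \<noteq> (0::real)"
proof
  assume "pochhammer v m = 0"
  then obtain j where "v = - of_nat j" by (auto simp: pochhammer_eq_0_iff)
  with assms show False by (cases j) auto
qed

lemma coef_conn:
  assumes v: "v > -1" "v \<noteq> 0" and k: "k \<le> n"
  shows "pochhammer (- real n) k * pochhammer (v + 2) k / pochhammer (1 - real n - v) k / fact k
     = fact n / pochhammer v n * dd v n k"
proof -
  have P1: "pochhammer (- real n) k = (-1)^k * pochhammer (real (n-k) + 1) k"
    using pochhammer_minus[of "real n" k] k by (simp add: of_nat_diff)
  have F: "fact n = fact (n-k) * pochhammer (real (n-k) + 1) k"
    using pochhammer_product'[of "1::real" "n-k" k] k by (simp add: pochhammer_fact add.commute)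
  have P2: "pochhammer (1 - real n - v) k = (-1)^k * pochhammer (v + real (n-k)) k"
    using pochhammer_minus[of "real n + v - 1" k] k by (simp add: of_nat_diff algebra_simps)
  have P3: "pochhammer v n = pochhammer v (n-k) * pochhammer (v + real (n-k)) k"
    using pochhammer_product'[of v "n-k" k] k by simp
  have nz1: "pochhammer v (n-k) \<noteq> 0" and nz2: "pochhammer v n \<noteq> 0"
    using poch_nz[OF v] by auto
  have nz3: "pochhammer (v + real (n-k)) k \<noteq> 0" using nz2 P3 by auto
  have nz4: "(fact (n-k) :: real) \<noteq> 0" by simp
  show ?thesis
    unfolding P1 P2 dd_def al_def be_def using k nz1 nz2 nz3
    by (simp add: F P3 field_simps)
qed

lemma conn:
  assumes v: "v > -1" "v \<noteq> 0"
  shows "hyp2F1_term n (complex_of_real (v + 2)) (complex_of_real (1 - real n - v)) z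
     = of_real (fact n / pochhammer v n) * SS v n z"
  unfolding hyp2F1_term_def SS_def sum_distrib_left
proof (rule sum.cong[OF refl])
  fix k assume "k \<in> {..n}"
  then have k: "k \<le> n" by simp
  have m: "(- of_nat n :: complex) = of_real (- real n)" by simp
  have "pochhammer (- of_nat n) k * pochhammer (complex_of_real (v + 2)) k /
          pochhammer (complex_of_real (1 - real n - v)) k * z ^ k / fact k
     = of_real (pochhammer (- real n) k * pochhammer (v + 2) k / pochhammer (1 - real n - v) k / fact k) * z^k"
    unfolding m pochhammer_of_real by (simp add: field_simps)
  also have "\<dots> = of_real (fact n / pochhammer v n * dd v n k) * z^k"
    by (simp only: coef_conn[OF v k])
  finally show "pochhammer (- of_nat n) k * pochhammer (complex_of_real (v + 2)) k /
          pochhammer (complex_of_real (1 - real n - v)) k * z ^ k / fact k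
     = of_real (fact n / pochhammer v n) * (of_real (dd v n k) * z^k)" by simp
qed

theorem lemma4:
  fixes n :: nat and \<nu> :: real and z :: complex
  assumes "\<nu> > -1" and "\<nu> \<noteq> 0"
    and "hyp2F1_term n (complex_of_real (\<nu> + 2)) (complex_of_real (1 - real n - \<nu>)) z = 0"
  shows "norm z < 1"
proof (rule ccontr)
  assume "\<not> norm z < 1"
  then have z: "cmod z \<ge> 1" by simp
  have S: "SS \<nu> n z \<noteq> 0"
  proof (cases n)
    case 0 then show ?thesis by (simp add: SS0)
  next
    case (Suc m)
    have "SS \<nu> m z \<noteq> 0" and h: "cmod (of_nat (Suc m) * SS \<nu> (Suc m) z - of_real (real (Suc m) + \<nu> + 1) * z * SS \<nu> m z)
      \<le> \<bar>\<nu>\<bar> * cmod z * cmod (SS \<nu> m z)"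
      using main[OF assms(1) z, of m] by auto
    from nzB[OF assms(1) z this(1) h] Suc show ?thesis by simp
  qed
  have c: "(of_real (fact n / pochhammer \<nu> n) :: complex) \<noteq> 0"
    using poch_nz[OF assms(1,2)] by simp
  from assms(3) conn[OF assms(1,2), of n z] S c show False by simp
qed

end
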